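(* Let $\mathbf{V}$ be a finite set of random variables containing a target variable $T$, and let $\mathbf{F} = \mathbf{V} \setminus \{T\}$ be the set of features. Suppose the joint distribution $P$ of $\mathbf{V}$ can be faithfully represented by a Bayesian network, and suppose the algorithm PFBP (described in the context) has access to a conditional independence oracle for $P$ and imposes no limit on the number of selected features. Then PFBP run with two Runs returns the Markov blanket of $T$.
   Context: Notation: $\mathbf{X} \perp T \mid \mathbf{S}$ denotes conditional independence of $\mathbf{X}$ and $T$ given $\mathbf{S}$ under $P$. A Markov blanket of $T$ with respect to $\mathbf{V}$ is a minimal set $\mathbf{S} \subseteq \mathbf{F}$ such that $(\mathbf{V}\setminus(\mathbf{S}\cup\{T\})) \perp T \mid \mathbf{S}$; for distributions faithful to a Bayesian network it is unique. A Bayesian network is a pair $\langle G, P\rangle$ with $G$ a DAG over $\mathbf{V}$ satisfying the Markov condition (each variable is independent of its non-descendants given its parents); $P$ is faithful to $G$ if all and only the conditional independencies of $P$ are those entailed by the Markov condition (equivalently, by d-separation in $G$); $P$ can be faithfully represented by a Bayesian network if such a $G$ exists. The PFBP algorithm with an independence oracle (Parallel Forward-Backward with Pruning, with Early Dropping) operates as follows. Initially the selected set is $\mathbf{S} = \emptyset$. It performs Runs, up to a maximum number maxRuns of Runs, stopping early if a Run leaves $\mathbf{S}$ unchanged. Each Run consists of: (1) set the remaining set $\mathbf{R} = \mathbf{F} \setminus \mathbf{S}$; (2) forward phase: repeat iterations in which every $X \in \mathbf{R}$ with $X \perp T \mid \mathbf{S}$ is removed from $\mathbf{R}$ (Early Dropping),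 and then, if some $X \in \mathbf{R}$ is conditionally dependent on $T$ given $\mathbf{S}$, one such variable (the best-ranked one) is added to $\mathbf{S}$ and removed from $\mathbf{R}$; the forward phase ends when no variable is added; (3) backward phase: repeatedly, if some $X \in \mathbf{S}$ satisfies $X \perp T \mid \mathbf{S}\setminus\{X\}$, remove one such variable from $\mathbf{S}$; stop when no variable can be removed. The output is $\mathbf{S}$. *)

theory Defs
  imports Main
begin

text \<open>A DAG over the finite variable set V is given by an edge relation E,
  with (a,b) \<in> E meaning a \<rightarrow> b.\<close>

definition is_dag :: "'v set \<Rightarrow> ('v \<times> 'v) set \<Rightarrow> bool" where
  "is_dag V E \<longleftrightarrow> E \<subseteq> V \<times> V \<and> acyclic E"

definition adjacent :: "('v \<times> 'v) set \<Rightarrow> 'v \<Rightarrow> 'v \<Rightarrow> bool" where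
  "adjacent E a b \<longleftrightarrow> (a, b) \<in> E \<or> (b, a) \<in> E"

definition is_path :: "'v set \<Rightarrow> ('v \<times> 'v) set \<Rightarrow> 'v list \<Rightarrow> 'v \<Rightarrow> 'v \<Rightarrow> bool" where
  "is_path V E p x y \<longleftrightarrow> p \<noteq> [] \<and> hd p = x \<and> last p = y \<and> distinct p \<and> set p \<subseteq> V \<and>
     (\<forall>i. Suc i < length p \<longrightarrow> adjacent E (p ! i) (p ! Suc i))"

definition collider :: "('v \<times> 'v) set \<Rightarrow> 'v list \<Rightarrow> nat \<Rightarrow> bool" where
  "collider E p i \<longleftrightarrow> (p ! (i - 1), p ! i) \<in> E \<and> (p ! Suc i, p ! i) \<in> E"

definition active :: "('v \<times> 'v) set \<Rightarrow> 'v set \<Rightarrow> 'v list \<Rightarrow> bool" where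
  "active E Z p \<longleftrightarrow> (\<forall>i. 0 < i \<and> Suc i < length p \<longrightarrow>
      (if collider E p i then (\<exists>w\<in>Z. (p ! i, w) \<in> E\<^sup>*) else p ! i \<notin> Z))"

definition dsep :: "'v set \<Rightarrow> ('v \<times> 'v) set \<Rightarrow> 'v set \<Rightarrow> 'v set \<Rightarrow> 'v set \<Rightarrow> bool" where
  "dsep V E X Y Z \<longleftrightarrow>
     (\<forall>x\<in>X. \<forall>y\<in>Y. \<not> (\<exists>p. is_path V E p x y \<and> active E Z p))"

text \<open>The distribution P is represented by its conditional-independence
  relation ci (the oracle): ci X Y Z means X \<perp> Y | Z under P.
  P is faithful to the DAG (V,E): for pairwise disjoint subsets of V,
  the independencies of P are exactly the d-separations of the DAG.\<close>

definition faithful_to :: "'v set \<Rightarrow> ('v set \<Rightarrow> 'v set \<Rightarrow> 'v set \<Rightarrow> bool) \<Rightarrow> ('v \<times> 'v) set \<Rightarrow> bool" where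
  "faithful_to V ci E \<longleftrightarrow> is_dag V E \<and>
     (\<forall>X Y Z. X \<subseteq> V \<longrightarrow> Y \<subseteq> V \<longrightarrow> Z \<subseteq> V \<longrightarrow>
        X \<inter> Y = {} \<longrightarrow> X \<inter> Z = {} \<longrightarrow> Y \<inter> Z = {} \<longrightarrow>
        (ci X Y Z \<longleftrightarrow> dsep V E X Y Z))"

definition faithfully_representable :: "'v set \<Rightarrow> ('v set \<Rightarrow> 'v set \<Rightarrow> 'v set \<Rightarrow> bool) \<Rightarrow> bool" where
  "faithfully_representable V ci \<longleftrightarrow> (\<exists>E. faithful_to V ci E)"

definition blanket_cond :: "'v set \<Rightarrow> ('v set \<Rightarrow> 'v set \<Rightarrow> 'v set \<Rightarrow> bool) \<Rightarrow> 'v \<Rightarrow> 'v set \<Rightarrow> bool" where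
  "blanket_cond V ci T S \<longleftrightarrow> S \<subseteq> V - {T} \<and> ci (V - (S \<union> {T})) {T} S"

definition markov_blanket :: "'v set \<Rightarrow> ('v set \<Rightarrow> 'v set \<Rightarrow> 'v set \<Rightarrow> bool) \<Rightarrow> 'v \<Rightarrow> 'v set \<Rightarrow> bool" where
  "markov_blanket V ci T S \<longleftrightarrow> blanket_cond V ci T S \<and>
     (\<forall>S'. S' \<subset> S \<longrightarrow> \<not> blanket_cond V ci T S')"

text \<open>In each iteration Early Dropping
  removes every X \<in> R with X \<perp> T | S; then, if some remaining variable
  (necessarily dependent on T given S) exists, one of them (an arbitrary one:
  the ranking is left unspecified) is added to S. No limit on |S|.\<close>
inductive forward :: "('v set \<Rightarrow> 'v set \<Rightarrow> 'v set \<Rightarrow> bool) \<Rightarrow> 'v \<Rightarrow> 'v set \<Rightarrow> 'v set \<Rightarrow> 'v set \<Rightarrow> bool"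
  for ci T where
  fwd_stop: "{X \<in> R. \<not> ci {X} {T} S} = {} \<Longrightarrow> forward ci T S R S"
| fwd_add: "X \<in> {X \<in> R. \<not> ci {X} {T} S} \<Longrightarrow>
    forward ci T (insert X S) ({X \<in> R. \<not> ci {X} {T} S} - {X}) S' \<Longrightarrow>
    forward ci T S R S'"

inductive backward :: "('v set \<Rightarrow> 'v set \<Rightarrow> 'v set \<Rightarrow> bool) \<Rightarrow> 'v \<Rightarrow> 'v set \<Rightarrow> 'v set \<Rightarrow> bool"
  for ci T where
  bwd_stop: "(\<forall>X\<in>S. \<not> ci {X} {T} (S - {X})) \<Longrightarrow> backward ci T S S"
| bwd_remove: "X \<in> S \<Longrightarrow> ci {X} {T} (S - {X}) \<Longrightarrow> backward ci T (S - {X}) S' \<Longrightarrow>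
    backward ci T S S'"

definition pfbp_run :: "('v set \<Rightarrow> 'v set \<Rightarrow> 'v set \<Rightarrow> bool) \<Rightarrow> 'v \<Rightarrow> 'v set \<Rightarrow> 'v set \<Rightarrow> 'v set \<Rightarrow> bool" where
  "pfbp_run ci T F S S'' \<longleftrightarrow> (\<exists>S'. forward ci T S (F - S) S' \<and> backward ci T S' S'')"

text \<open>pfbp_runs ci T F n S out: starting from selected set S, performing at most
  n Runs (stopping early if a Run leaves S unchanged), the output can be out.\<close>
inductive pfbp_runs :: "('v set \<Rightarrow> 'v set \<Rightarrow> 'v set \<Rightarrow> bool) \<Rightarrow> 'v \<Rightarrow> 'v set \<Rightarrow> nat \<Rightarrow> 'v set \<Rightarrow> 'v set \<Rightarrow> bool"
  for ci T F where
  runs_done: "pfbp_runs ci T F 0 S S"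
| runs_unchanged: "pfbp_run ci T F S S \<Longrightarrow> pfbp_runs ci T F (Suc n) S S"
| runs_changed: "pfbp_run ci T F S S' \<Longrightarrow> S' \<noteq> S \<Longrightarrow> pfbp_runs ci T F n S' out \<Longrightarrow>
    pfbp_runs ci T F (Suc n) S out"

definition PFBP :: "('v set \<Rightarrow> 'v set \<Rightarrow> 'v set \<Rightarrow> bool) \<Rightarrow> 'v \<Rightarrow> 'v set \<Rightarrow> nat \<Rightarrow> 'v set \<Rightarrow> bool" where
  "PFBP ci T F maxRuns out \<longleftrightarrow> pfbp_runs ci T F maxRuns {} out"

end

theory Submission
  imports Defs
begin

definition adjs :: "'v set \<Rightarrow> ('v \<times> 'v) set \<Rightarrow> 'v \<Rightarrow> 'v set" where
  "adjs V E T = {x\<in>V. x \<noteq> T \<and> adjacent E x T}"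

definition MBg :: "'v set \<Rightarrow> ('v \<times> 'v) set \<Rightarrow> 'v \<Rightarrow> 'v set" where
  "MBg V E T = {x\<in>V. x \<noteq> T \<and> (adjacent E x T \<or> (\<exists>c. (x,c)\<in>E \<and> (T,c)\<in>E))}"

lemma acyc_noloop: "acyclic E \<Longrightarrow> (x,x) \<notin> E"
  by (meson acyclic_def r_into_trancl')

lemma acyc_no2: "acyclic E \<Longrightarrow> (x,y) \<in> E \<Longrightarrow> (y,x) \<in> E \<Longrightarrow> False"
  by (meson acyclic_def r_into_trancl' trancl_into_trancl)

lemma path2:
  assumes "is_dag V E" "adjacent E x T" "x \<noteq> T"
  shows "is_path V E [x,T] x T \<and> active E Z [x,T]"
  using assms unfolding is_dag_def is_path_def active_def adjacent_def
  by (auto simp: less_Suc_eq)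

lemma path3:
  assumes "is_dag V E" "(x,c) \<in> E" "(T,c) \<in> E" "x \<noteq> T" "c \<in> Z"
  shows "is_path V E [x,c,T] x T \<and> active E Z [x,c,T]"
proof -
  have ac: "acyclic E" and sub: "E \<subseteq> V \<times> V" using assms(1) by (auto simp: is_dag_def)
  have "x \<noteq> c" "T \<noteq> c" using acyc_noloop[OF ac] assms by auto
  moreover have "\<forall>i. 0 < i \<and> Suc i < 3 \<longrightarrow> i = 1" by auto
  ultimately show ?thesis using assms sub unfolding is_path_def active_def adjacent_def collider_def
    by (auto simp: less_Suc_eq nth_Cons')
qed

context
  fixes V :: "'v set" and E and ci and T
  assumes fa: "faithful_to V ci E" and TV: "T \<in> V"
begin

lemma dag: "is_dag V E" using fa by (simp add: faithful_to_def)
lemma ac: "acyclic E" using dag by (simp add: is_dag_def)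
lemma EV: "E \<subseteq> V \<times> V" using dag by (simp add: is_dag_def)

lemma ci_iff:
  assumes "W \<subseteq> V" "T \<notin> W" "Z \<subseteq> V - {T}" "W \<inter> Z = {}"
  shows "ci W {T} Z \<longleftrightarrow> dsep V E W {T} Z"
proof -
  have all: "\<forall>X Y Z. X \<subseteq> V \<longrightarrow> Y \<subseteq> V \<longrightarrow> Z \<subseteq> V \<longrightarrow>
        X \<inter> Y = {} \<longrightarrow> X \<inter> Z = {} \<longrightarrow> Y \<inter> Z = {} \<longrightarrow>
        (ci X Y Z \<longleftrightarrow> dsep V E X Y Z)" using fa unfolding faithful_to_def by (rule conjunct2)
  have "W \<subseteq> V" "{T} \<subseteq> V" "Z \<subseteq> V" "W \<inter> {T} = {}" "W \<inter> Z = {}" "{T} \<inter> Z = {}"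
    using assms TV by auto
  thus ?thesis using spec[OF spec[OF spec[OF all, of W], of "{T}"], of Z] by simp
qed

lemma dep_of:
  assumes "x \<in> W" "W \<subseteq> V" "T \<notin> W" "Z \<subseteq> V - {T}" "W \<inter> Z = {}"
    "is_path V E p x T" "active E Z p"
  shows "\<not> ci W {T} Z"
  using ci_iff[OF assms(2-5)] assms unfolding dsep_def by auto

lemma dep_adj:
  assumes "x \<in> adjs V E T" "Z \<subseteq> V - {T}" "x \<notin> Z"
  shows "\<not> ci {x} {T} Z"
proof -
  have "x \<in> V" "x \<noteq> T" "adjacent E x T" using assms by (auto simp: adjs_def)
  thus ?thesis using dep_of[of x "{x}" Z "[x,T]"] path2[OF dag, of x T Z] assms by auto
qed

lemma dep_mb:
  assumes "x \<in> MBg V E T" "Z \<subseteq> V - {T}" "x \<notin> Z" "adjs V E T - {x} \<subseteq> Z"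
  shows "\<not> ci {x} {T} Z"
proof -
  have xV: "x \<in> V" "x \<noteq> T" using assms by (auto simp: MBg_def)
  show ?thesis
  proof (cases "adjacent E x T")
    case True thus ?thesis using dep_adj assms xV by (auto simp: adjs_def)
  next
    case False
    then obtain c where c: "(x,c)\<in>E" "(T,c)\<in>E" using assms by (auto simp: MBg_def)
    have "c \<in> adjs V E T" using c EV acyc_noloop[OF ac, of T] by (auto simp: adjs_def adjacent_def)
    moreover have "c \<noteq> x" using c acyc_noloop[OF ac] by auto
    ultimately have "c \<in> Z" using assms by auto
    thus ?thesis using dep_of[of x "{x}" Z "[x,c,T]"] path3[OF dag c xV(2)] assms xV by auto
  qed
qed

lemma adjs_MBg: "adjs V E T \<subseteq> MBg V E T" by (auto simp: adjs_def MBg_def)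
lemma MBg_F: "MBg V E T \<subseteq> V - {T}" by (auto simp: MBg_def)

lemma main_sep:
  assumes "MBg V E T \<subseteq> S" "S \<subseteq> V - {T}" "x \<notin> S"  "x \<noteq> T"
    "is_path V E p x T" "active E S p"
  shows False
proof -
  define n where "n = length p"
  have ne: "p \<noteq> []" and hd: "hd p = x" and la: "last p = T" and di: "distinct p"
    and sv: "set p \<subseteq> V" and adj: "\<And>i. Suc i < n \<Longrightarrow> adjacent E (p!i) (p!Suc i)"
    using assms(5) unfolding is_path_def n_def by auto
  have xT: "x \<noteq> T" using assms by auto
  have n1: "n \<ge> 1" using ne n_def by (cases p) auto
  have h0: "p!0 = x" using hd ne by (simp add: hd_conv_nth)
  have hl: "p!(n-1) = T" using la ne n_def by (simp add: last_conv_nth)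
  have n2: "n \<ge> 2" using n1 h0 hl xT by (cases "n = 1") auto
  have inV: "\<And>i. i < n \<Longrightarrow> p!i \<in> V" using sv n_def by auto
  have dneq: "\<And>i j. i < n \<Longrightarrow> j < n \<Longrightarrow> i \<noteq> j \<Longrightarrow> p!i \<noteq> p!j"
    using di n_def by (simp add: nth_eq_iff_index_eq)
  have act: "\<And>i. 0 < i \<Longrightarrow> Suc i < n \<Longrightarrow> p!i \<in> S \<Longrightarrow> collider E p i"
    using assms(6) unfolding active_def n_def by (metis (full_types))
  define b where "b = p!(n-2)"
  have "adjacent E b T" using adj[of "n-2"] n2 hl by (simp add: b_def Suc_diff_Suc numeral_2_eq_2)
  moreover have "b \<noteq> T" using dneq[of "n-2" "n-1"] n2 hl b_def by auto
  moreover have "b \<in> V" using inV[of "n-2"] n2 b_def by auto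
  ultimately have bS: "b \<in> S" using assms(1) by (auto simp: MBg_def)
  have n3: "n \<ge> 3" using n2 bS h0 b_def assms(3) by (cases "n = 2") auto
  have "collider E p (n-2)" using act[of "n-2"] n3 bS b_def by auto
  hence ab: "(p!(n-3), b) \<in> E" and Tb: "(T, b) \<in> E"
    unfolding collider_def b_def using n3 hl
    by (auto simp: numeral_3_eq_3 numeral_2_eq_2 Suc_diff_Suc)
  define a where "a = p!(n-3)"
  have "a \<noteq> T" using dneq[of "n-3" "n-1"] n3 hl a_def by auto
  moreover have "a \<in> V" using inV[of "n-3"] n3 a_def by auto
  ultimately have aS: "a \<in> S" using assms(1) ab Tb a_def by (auto simp: MBg_def)
  have n4: "n \<ge> 4" using n3 aS h0 a_def assms(3) by (cases "n = 3") auto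
  have "collider E p (n-3)" using act[of "n-3"] n4 aS a_def by auto
  hence "(b, a) \<in> E" unfolding collider_def a_def b_def using n4
    by (auto simp: numeral_3_eq_3 numeral_2_eq_2 Suc_diff_Suc)
  thus False using acyc_no2[OF ac] ab a_def by blast
qed

lemma indep_out:
  assumes "MBg V E T \<subseteq> S" "S \<subseteq> V - {T}" "x \<in> V" "x \<noteq> T" "x \<notin> S"
  shows "ci {x} {T} S"
  using ci_iff[of "{x}" S] assms main_sep[OF assms(1,2)] unfolding dsep_def by auto

lemma blanket_iff:
  "blanket_cond V ci T S \<longleftrightarrow> MBg V E T \<subseteq> S \<and> S \<subseteq> V - {T}"
proof
  assume b: "blanket_cond V ci T S"
  hence SF: "S \<subseteq> V - {T}" and c: "ci (V - (S \<union> {T})) {T} S" by (auto simp: blanket_cond_def)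
  let ?W = "V - (S \<union> {T})"
  have W: "?W \<subseteq> V" "T \<notin> ?W" "?W \<inter> S = {}" by auto
  have "MBg V E T \<subseteq> S"
  proof
    fix x assume x: "x \<in> MBg V E T"
    show "x \<in> S"
    proof (rule ccontr)
      assume xS: "x \<notin> S"
      have xW: "x \<in> ?W" using x xS by (auto simp: MBg_def)
      show False
      proof (cases "adjacent E x T")
        case True thus False using dep_of[OF xW W(1,2) SF W(3)] path2[OF dag True] c xW by auto
      next
        case False
        then obtain c' where cc: "(x,c')\<in>E" "(T,c')\<in>E" using x by (auto simp: MBg_def)
        show False
        proof (cases "c' \<in> S")
          case True thus False using dep_of[OF xW W(1,2) SF W(3)] path3[OF dag cc _ True] c xW by auto
        next
          case False
          have "c' \<noteq> T" "c' \<in> V" using cc EV acyc_noloop[OF ac, of T] by auto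
          hence cW: "c' \<in> ?W" using False by auto
          have "adjacent E c' T" using cc by (auto simp: adjacent_def)
          thus False using dep_of[OF cW W(1,2) SF W(3)] path2[OF dag _ \<open>c' \<noteq> T\<close>] c by auto
        qed
      qed
    qed
  qed
  thus "MBg V E T \<subseteq> S \<and> S \<subseteq> V - {T}" using SF by auto
next
  assume a: "MBg V E T \<subseteq> S \<and> S \<subseteq> V - {T}"
  let ?W = "V - (S \<union> {T})"
  have "dsep V E ?W {T} S" unfolding dsep_def
  proof (intro ballI notI)
    fix x y assume x: "x \<in> ?W" and y: "y \<in> {T}" and ex: "\<exists>p. is_path V E p x y \<and> active E S p"
    then obtain p where "is_path V E p x T" "active E S p" by auto
    moreover have "x \<notin> S" "x \<noteq> T" using x by auto
    ultimately show False using main_sep a by blast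
  qed
  thus "blanket_cond V ci T S" using ci_iff[of ?W S] a by (auto simp: blanket_cond_def)
qed

lemma mb_iff: "markov_blanket V ci T S \<longleftrightarrow> S = MBg V E T"
proof
  assume m: "markov_blanket V ci T S"
  hence "blanket_cond V ci T S" unfolding markov_blanket_def by (rule conjunct1)
  hence b: "MBg V E T \<subseteq> S" "S \<subseteq> V - {T}" using blanket_iff by (simp_all only:)
  have "blanket_cond V ci T (MBg V E T)" using blanket_iff MBg_F by (simp only: order_refl simp_thms)
  hence "\<not> MBg V E T \<subset> S" using m unfolding markov_blanket_def by (metis)
  thus "S = MBg V E T" using b by (metis psubsetI)
next
  assume S: "S = MBg V E T"
  have "blanket_cond V ci T S" using blanket_iff MBg_F S by (simp only: order_refl simp_thms)
  moreover have "\<forall>S'. S' \<subset> S \<longrightarrow> \<not> blanket_cond V ci T S'"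
  proof (intro allI impI)
    fix S' assume "S' \<subset> S"
    thus "\<not> blanket_cond V ci T S'" using blanket_iff[of S'] S by auto
  qed
  ultimately show "markov_blanket V ci T S" unfolding markov_blanket_def by (rule conjI)
qed

end

lemma fwd_sub:
  "forward ci T S R S' \<Longrightarrow> S \<subseteq> F \<Longrightarrow> R \<subseteq> F \<Longrightarrow> S \<subseteq> S' \<and> S' \<subseteq> F"
proof (induction rule: forward.induct)
  case (fwd_stop R S) thus ?case by auto
next
  case (fwd_add X R S S') thus ?case by auto
qed

lemma fwd_keep:
  "forward ci T S R S' \<Longrightarrow> S \<subseteq> F \<Longrightarrow> R \<subseteq> F \<Longrightarrow> R \<inter> S = {} \<Longrightarrow> A \<subseteq> S \<union> R \<Longrightarrow>
   (\<forall>x\<in>A. \<forall>Z. S \<subseteq> Z \<longrightarrow> x \<notin> Z \<longrightarrow> Z \<subseteq> F \<longrightarrow> \<not> ci {x} {T} Z) \<Longrightarrow> A \<subseteq> S'"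
proof (induction rule: forward.induct)
  case (fwd_stop R S)
  show ?case
  proof
    fix x assume x: "x \<in> A"
    show "x \<in> S"
    proof (rule ccontr)
      assume xS: "x \<notin> S"
      hence "x \<in> R" using x fwd_stop.prems(4) by auto
      moreover have "\<not> ci {x} {T} S" using fwd_stop.prems(5) x xS fwd_stop.prems(1) by auto
      ultimately have "x \<in> {X \<in> R. \<not> ci {X} {T} S}" by simp
      thus False using fwd_stop.hyps by simp
    qed
  qed
next
  case (fwd_add X R S S')
  let ?R = "{X \<in> R. \<not> ci {X} {T} S} - {X}"
  have XR: "X \<in> R" using fwd_add.hyps(1) by simp
  have "A \<subseteq> insert X S \<union> ?R"
  proof
    fix x assume x: "x \<in> A"
    show "x \<in> insert X S \<union> ?R"
    proof (cases "x \<in> S")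
      case False
      hence "x \<in> R" using x fwd_add.prems(4) by auto
      moreover have "\<not> ci {x} {T} S" using fwd_add.prems(5) x False fwd_add.prems(1) by auto
      ultimately show ?thesis by auto
    qed auto
  qed
  moreover have "\<forall>x\<in>A. \<forall>Z. insert X S \<subseteq> Z \<longrightarrow> x \<notin> Z \<longrightarrow> Z \<subseteq> F \<longrightarrow> \<not> ci {x} {T} Z"
    using fwd_add.prems(5) by auto
  moreover have "insert X S \<subseteq> F" using XR fwd_add.prems(1,2) by auto
  moreover have "?R \<subseteq> F" using fwd_add.prems(2) by auto
  moreover have "?R \<inter> insert X S = {}" using fwd_add.prems(3) by auto
  ultimately show ?case using fwd_add.IH by blast
qed

lemma bwd_sub: "backward ci T S S' \<Longrightarrow> S' \<subseteq> S"
  by (induction rule: backward.induct) auto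

lemma bwd_final: "backward ci T S S' \<Longrightarrow> \<forall>X\<in>S'. \<not> ci {X} {T} (S' - {X})"
  by (induction rule: backward.induct) auto

lemma bwd_keep:
  "backward ci T S S' \<Longrightarrow> A \<subseteq> S \<Longrightarrow> S \<subseteq> F \<Longrightarrow>
   (\<forall>x\<in>A. \<forall>Z. A - {x} \<subseteq> Z \<longrightarrow> Z \<subseteq> F \<longrightarrow> x \<notin> Z \<longrightarrow> \<not> ci {x} {T} Z) \<Longrightarrow> A \<subseteq> S'"
proof (induction rule: backward.induct)
  case (bwd_stop S) thus ?case by auto
next
  case (bwd_remove X S S')
  have "A \<subseteq> S - {X}"
  proof
    fix x assume x: "x \<in> A"
    show "x \<in> S - {X}"
    proof (rule ccontr)
      assume "x \<notin> S - {X}"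
      hence "x = X" using x bwd_remove by auto
      moreover have "A - {X} \<subseteq> S - {X}" "S - {X} \<subseteq> F" "X \<notin> S - {X}"
        using bwd_remove.prems(1,2) by auto
      ultimately have "\<not> ci {X} {T} (S - {X})" using bwd_remove.prems(3) x by blast
      thus False using bwd_remove.hyps(2) by simp
    qed
  qed
  thus ?case using bwd_remove by auto
qed

context
  fixes V :: "'v set" and E and ci and T
  assumes fa: "faithful_to V ci E" and TV: "T \<in> V"
begin

lemma run_adj:
  assumes "pfbp_run ci T (V - {T}) S S''" "S \<subseteq> V - {T}"
  shows "adjs V E T \<subseteq> S''"
proof -
  obtain S' where f: "forward ci T S (V - {T} - S) S'" and b: "backward ci T S' S''"
    using assms unfolding pfbp_run_def by auto
  have P: "\<forall>x\<in>adjs V E T. \<forall>Z. Z \<subseteq> V - {T} \<longrightarrow> x \<notin> Z \<longrightarrow> \<not> ci {x} {T} Z"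
    using dep_adj[OF fa TV] by blast
  have s: "S' \<subseteq> V - {T}" using fwd_sub[OF f] assms by auto
  have A: "adjs V E T \<subseteq> V - {T}" using adjs_MBg[OF fa TV] MBg_F[OF fa TV] by (rule order_trans)
  have "adjs V E T \<subseteq> S'"
  proof (rule fwd_keep[OF f assms(2)])
    show "V - {T} - S \<subseteq> V - {T}" "(V - {T} - S) \<inter> S = {}" by auto
    show "adjs V E T \<subseteq> S \<union> (V - {T} - S)" using A by auto
    show "\<forall>x\<in>adjs V E T. \<forall>Z. S \<subseteq> Z \<longrightarrow> x \<notin> Z \<longrightarrow> Z \<subseteq> V - {T} \<longrightarrow> \<not> ci {x} {T} Z"
      using P by blast
  qed
  moreover have "\<forall>x\<in>adjs V E T. \<forall>Z. adjs V E T - {x} \<subseteq> Z \<longrightarrow> Z \<subseteq> V - {T} \<longrightarrow> x \<notin> Z \<longrightarrow> \<not> ci {x} {T} Z"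
    using P by blast
  ultimately show ?thesis using bwd_keep[OF b _ s] by blast
qed

lemma run_mb:
  assumes "pfbp_run ci T (V - {T}) S S''" "S \<subseteq> V - {T}" "adjs V E T \<subseteq> S"
  shows "S'' = MBg V E T"
proof -
  obtain S' where f: "forward ci T S (V - {T} - S) S'" and b: "backward ci T S' S''"
    using assms unfolding pfbp_run_def by auto
  have s: "S' \<subseteq> V - {T}" using fwd_sub[OF f] assms by auto
  have D: "\<And>x Z. x \<in> MBg V E T \<Longrightarrow> Z \<subseteq> V - {T} \<Longrightarrow> x \<notin> Z \<Longrightarrow> adjs V E T - {x} \<subseteq> Z \<Longrightarrow> \<not> ci {x} {T} Z"
    using dep_mb[OF fa TV] by blast
  have "MBg V E T \<subseteq> S'"
  proof (rule fwd_keep[OF f assms(2)])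
    show "V - {T} - S \<subseteq> V - {T}" "(V - {T} - S) \<inter> S = {}" by auto
    show "MBg V E T \<subseteq> S \<union> (V - {T} - S)" using MBg_F[OF fa TV] by auto
    show "\<forall>x\<in>MBg V E T. \<forall>Z. S \<subseteq> Z \<longrightarrow> x \<notin> Z \<longrightarrow> Z \<subseteq> V - {T} \<longrightarrow> \<not> ci {x} {T} Z"
    proof (intro ballI allI impI)
      fix x Z assume "x \<in> MBg V E T" "S \<subseteq> Z" "x \<notin> Z" "Z \<subseteq> V - {T}"
      thus "\<not> ci {x} {T} Z" using D assms(3) by blast
    qed
  qed
  moreover have "\<forall>x\<in>MBg V E T. \<forall>Z. MBg V E T - {x} \<subseteq> Z \<longrightarrow> Z \<subseteq> V - {T} \<longrightarrow> x \<notin> Z \<longrightarrow> \<not> ci {x} {T} Z"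
  proof (intro ballI allI impI)
    fix x Z assume "x \<in> MBg V E T" "MBg V E T - {x} \<subseteq> Z" "x \<notin> Z" "Z \<subseteq> V - {T}"
    moreover have "adjs V E T - {x} \<subseteq> Z" using adjs_MBg[OF fa TV] calculation(2) by blast
    ultimately show "\<not> ci {x} {T} Z" using D by blast
  qed
  ultimately have m: "MBg V E T \<subseteq> S''" using bwd_keep[OF b _ s] by blast
  have s'': "S'' \<subseteq> V - {T}" using bwd_sub[OF b] s by auto
  have fin: "\<forall>X\<in>S''. \<not> ci {X} {T} (S'' - {X})" using bwd_final[OF b] .
  show ?thesis
  proof (rule ccontr)
    assume "S'' \<noteq> MBg V E T"
    then obtain X where X: "X \<in> S''" "X \<notin> MBg V E T" using m by auto
    have "MBg V E T \<subseteq> S'' - {X}" using m X by auto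
    moreover have "S'' - {X} \<subseteq> V - {T}" "X \<in> V" "X \<noteq> T" "X \<notin> S'' - {X}" using s'' X by auto
    ultimately have "ci {X} {T} (S'' - {X})" by (rule indep_out[OF fa TV])
    thus False using fin X by auto
  qed
qed

end

theorem theorem1:
  fixes V :: "'v set" and T :: 'v and ci :: "'v set \<Rightarrow> 'v set \<Rightarrow> 'v set \<Rightarrow> bool"
  assumes "finite V" and "T \<in> V"
    and "faithfully_representable V ci"
    and "PFBP ci T (V - {T}) 2 out"
  shows "markov_blanket V ci T out \<and> (\<forall>S. markov_blanket V ci T S \<longrightarrow> S = out)"
proof -
  obtain E where fa: "faithful_to V ci E" using assms(3) by (auto simp: faithfully_representable_def)
  note TV = assms(2)
  have "out = MBg V E T"
  proof -
    have r: "pfbp_runs ci T (V - {T}) (Suc (Suc 0)) {} out"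
      using assms(4) by (simp add: PFBP_def numeral_2_eq_2)
    from r show ?thesis
    proof (cases)
      case runs_unchanged
      hence "pfbp_run ci T (V - {T}) {} {}" "out = {}" by auto
      thus ?thesis using run_adj[OF fa TV] run_mb[OF fa TV] by (metis empty_subsetI)
    next
      case (runs_changed S1)
      hence r1: "pfbp_run ci T (V - {T}) {} S1" and rr: "pfbp_runs ci T (V - {T}) (Suc 0) S1 out" by auto
      have a1: "adjs V E T \<subseteq> S1" using run_adj[OF fa TV r1] by auto
      obtain S' where f: "forward ci T {} (V - {T} - {}) S'" and b: "backward ci T S' S1"
        using r1 unfolding pfbp_run_def by auto
      have s1: "S1 \<subseteq> V - {T}" using fwd_sub[OF f] bwd_sub[OF b] by auto
      from rr show ?thesis
      proof (cases)
        case runs_unchanged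
        thus ?thesis using run_mb[OF fa TV _ s1 a1] by auto
      next
        case (runs_changed S2)
        hence "S2 = MBg V E T" using run_mb[OF fa TV _ s1 a1] by auto
        moreover have "out = S2" using runs_changed(3) by (auto elim: pfbp_runs.cases)
        ultimately show ?thesis by simp
      qed
    qed
  qed
  thus ?thesis using mb_iff[OF fa TV] by auto
qed

end
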